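(* Let $(D_d)_{d\in\mathbb N}$ be convex open sets $D_d\subset\mathbb R^d$ with $\lambda_d(D_d)=1$, let $L_{0,d},L_{1,d}>0$, and let \[ C_d^1(L)=\{f\in C^1(D_d)\mid\|f\|_\infty\le1,\ \operatorname{Lip}(f)\le L_{0,d},\ \operatorname{Lip}(\nabla f)\le L_{1,d}\},\qquad F_d^1=\{f\in C^1(D_d)\mid \operatorname{Lip}(\nabla f)\le L_{1,d}\}. \] If $\varepsilon\in(0,1)$ and $L_{1,d}\operatorname{diam}(D_d)^2\le\varepsilon$, then $n(\varepsilon,C_d^1(L))=n(\varepsilon,F_d^1)=1$. Hence, if $\lim_{d\to\infty}L_{1,d}\operatorname{diam}(D_d)^2=0$, then for every $\varepsilon\in(0,1)$, $n(\varepsilon,C_d^1(L))=n(\varepsilon,F_d^1)=1$ for all sufficiently large $d$.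
   Context: $\operatorname{diam}(D)$ is the Euclidean diameter; Lipschitz constants are with respect to Euclidean norms on $D_d$. $n(\varepsilon,F_d)$ is the information complexity of integration $\int_{D_d}f(x)\,dx$ over $F_d$: the minimal number $n\ge0$ of function values (possibly adaptively chosen points in $D_d$, combined by an arbitrary map; constant algorithms when $n=0$) for which the worst-case error over $F_d$ is $\le\varepsilon$. *)

theory Defs
  imports "HOL-Analysis.Analysis"
begin

text \<open>fvec = real sequences with finite support, with the l2 inner product.
  The space R^d is the subspace Rd d of vectors supported in {0..<d}; on it the
  norm is the Euclidean norm.\<close>

typedef fvec = "{x::nat \<Rightarrow> real. finite {i. x i \<noteq> 0}}"
  morphisms coord Abs_fvec
  by (rule exI[of _ "\<lambda>_. 0"]) simp

setup_lifting type_definition_fvec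

lemma fin_supp2:
  fixes x y :: "nat \<Rightarrow> real" and f :: "real \<Rightarrow> real \<Rightarrow> real"
  assumes "finite {i. x i \<noteq> 0}" "finite {i. y i \<noteq> 0}" "f 0 0 = 0"
  shows "finite {i. f (x i) (y i) \<noteq> 0}"
  by (rule finite_subset[of _ "{i. x i \<noteq> 0} \<union> {i. y i \<noteq> 0}"]) (use assms in auto)

instantiation fvec :: real_vector
begin
lift_definition zero_fvec :: fvec is "\<lambda>_. 0" by simp
lift_definition plus_fvec :: "fvec \<Rightarrow> fvec \<Rightarrow> fvec" is "\<lambda>x y i. x i + y i"
  by (rule fin_supp2[where f="(+)"]) auto
lift_definition minus_fvec :: "fvec \<Rightarrow> fvec \<Rightarrow> fvec" is "\<lambda>x y i. x i - y i"
  by (rule fin_supp2[where f="(-)"]) auto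
lift_definition uminus_fvec :: "fvec \<Rightarrow> fvec" is "\<lambda>x i. - x i" by simp
lift_definition scaleR_fvec :: "real \<Rightarrow> fvec \<Rightarrow> fvec" is "\<lambda>r x i. r * x i"
  by (erule finite_subset[rotated]) auto
instance
  by standard (transfer; simp add: fun_eq_iff algebra_simps)+
end

lemma sum_supp_eq:
  fixes x y :: "nat \<Rightarrow> real"
  assumes "finite S" "{i. x i \<noteq> 0} \<subseteq> S" "finite {i. y i \<noteq> 0}"
  shows "(\<Sum>i\<in>{i. x i \<noteq> 0 \<or> y i \<noteq> 0}. x i * y i) = (\<Sum>i\<in>S. x i * y i)"
proof -
  have fin: "finite {i. x i \<noteq> 0 \<or> y i \<noteq> 0}"
    by (rule finite_subset[of _ "S \<union> {i. y i \<noteq> 0}"]) (use assms in auto)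
  have "(\<Sum>i\<in>{i. x i \<noteq> 0 \<or> y i \<noteq> 0}. x i * y i) = (\<Sum>i\<in>{i. x i \<noteq> 0}. x i * y i)"
    by (rule sum.mono_neutral_right) (use assms fin in auto)
  also have "\<dots> = (\<Sum>i\<in>S. x i * y i)"
    by (rule sum.mono_neutral_left) (use assms in auto)
  finally show ?thesis .
qed

instantiation fvec :: real_inner
begin
lift_definition inner_fvec :: "fvec \<Rightarrow> fvec \<Rightarrow> real" is
  "\<lambda>x y. \<Sum>i\<in>{i. x i \<noteq> 0 \<or> y i \<noteq> 0}. x i * y i" .
definition norm_fvec :: "fvec \<Rightarrow> real" where "norm_fvec x = sqrt (inner x x)"
definition dist_fvec :: "fvec \<Rightarrow> fvec \<Rightarrow> real" where "dist_fvec x y = norm (x - y)"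
definition sgn_fvec :: "fvec \<Rightarrow> fvec" where "sgn_fvec x = x /\<^sub>R norm x"
definition uniformity_fvec :: "(fvec \<times> fvec) filter" where
  "uniformity_fvec = (INF e\<in>{0<..}. principal {(x, y). dist x y < e})"
definition open_fvec :: "fvec set \<Rightarrow> bool" where
  "open_fvec U = (\<forall>x\<in>U. \<forall>\<^sub>F (x', y) in uniformity. x' = x \<longrightarrow> y \<in> U)"
instance
proof
  fix x y z :: fvec and r :: real
  show "inner x y = inner y x"
    by transfer (simp add: disj_commute mult.commute)
  show "inner (x + y) z = inner x z + inner y z"
  proof transfer
    fix x y z :: "nat \<Rightarrow> real"
    assume f: "finite {i. x i \<noteq> 0}" "finite {i. y i \<noteq> 0}" "finite {i. z i \<noteq> 0}"
    let ?S = "{i. x i \<noteq> 0} \<union> {i. y i \<noteq> 0}"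
    have fS: "finite ?S" using f by simp
    have "(\<Sum>i\<in>{i. x i + y i \<noteq> 0 \<or> z i \<noteq> 0}. (x i + y i) * z i) = (\<Sum>i\<in>?S. (x i + y i) * z i)"
      by (rule sum_supp_eq) (use fS f in auto)
    moreover have "(\<Sum>i\<in>{i. x i \<noteq> 0 \<or> z i \<noteq> 0}. x i * z i) = (\<Sum>i\<in>?S. x i * z i)"
      by (rule sum_supp_eq) (use fS f in auto)
    moreover have "(\<Sum>i\<in>{i. y i \<noteq> 0 \<or> z i \<noteq> 0}. y i * z i) = (\<Sum>i\<in>?S. y i * z i)"
      by (rule sum_supp_eq) (use fS f in auto)
    ultimately show "(\<Sum>i\<in>{i. x i + y i \<noteq> 0 \<or> z i \<noteq> 0}. (x i + y i) * z i) =
       (\<Sum>i\<in>{i. x i \<noteq> 0 \<or> z i \<noteq> 0}. x i * z i) + (\<Sum>i\<in>{i. y i \<noteq> 0 \<or> z i \<noteq> 0}. y i * z i)"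
      by (simp add: sum.distrib distrib_right)
  qed
  show "inner (r *\<^sub>R x) y = r * inner x y"
  proof transfer
    fix r :: real and x y :: "nat \<Rightarrow> real"
    assume f: "finite {i. x i \<noteq> 0}" "finite {i. y i \<noteq> 0}"
    let ?S = "{i. x i \<noteq> 0}"
    have "(\<Sum>i\<in>{i. r * x i \<noteq> 0 \<or> y i \<noteq> 0}. r * x i * y i) = (\<Sum>i\<in>?S. r * x i * y i)"
      using sum_supp_eq[of ?S "\<lambda>i. r * x i" y] f by auto
    moreover have "(\<Sum>i\<in>{i. x i \<noteq> 0 \<or> y i \<noteq> 0}. x i * y i) = (\<Sum>i\<in>?S. x i * y i)"
      by (rule sum_supp_eq) (use f in auto)
    ultimately show "(\<Sum>i\<in>{i. r * x i \<noteq> 0 \<or> y i \<noteq> 0}. r * x i * y i) = r * (\<Sum>i\<in>{i. x i \<noteq> 0 \<or> y i \<noteq> 0}. x i * y i)"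
      by (simp add: sum_distrib_left mult.assoc)
  qed
  show "0 \<le> inner x x"
    by transfer (auto intro: sum_nonneg)
  show "inner x x = 0 \<longleftrightarrow> x = 0"
  proof transfer
    fix x :: "nat \<Rightarrow> real"
    assume f: "finite {i. x i \<noteq> 0}"
    have "(\<Sum>i\<in>{i. x i \<noteq> 0 \<or> x i \<noteq> 0}. x i * x i) = 0 \<longleftrightarrow> (\<forall>i\<in>{i. x i \<noteq> 0}. x i * x i = 0)"
      using f by (subst sum_nonneg_eq_0_iff) auto
    then show "((\<Sum>i\<in>{i. x i \<noteq> 0 \<or> x i \<noteq> 0}. x i * x i) = 0) = (x = (\<lambda>_. 0))"
      by (auto simp: fun_eq_iff)
  qed
  show "norm x = sqrt (inner x x)" by (simp add: norm_fvec_def)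
  show "dist x y = norm (x - y)" by (simp add: dist_fvec_def)
  show "sgn x = x /\<^sub>R norm x" by (simp add: sgn_fvec_def)
qed (simp_all add: uniformity_fvec_def open_fvec_def)
end

definition Rd :: "nat \<Rightarrow> fvec set" where
  "Rd d = {x. \<forall>i\<ge>d. coord x i = 0}"

definition emb :: "nat \<Rightarrow> (nat \<Rightarrow> real) \<Rightarrow> fvec" where
  "emb d x = Abs_fvec (\<lambda>i. if i < d then x i else 0)"

definition lebesgue_d :: "nat \<Rightarrow> fvec measure" where
  "lebesgue_d d = distr (PiM {..<d} (\<lambda>_. lborel)) borel (emb d)"

definition C1_grad :: "nat \<Rightarrow> fvec set \<Rightarrow> (fvec \<Rightarrow> real) \<Rightarrow> (fvec \<Rightarrow> fvec) \<Rightarrow> bool" where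
  "C1_grad d D f g \<longleftrightarrow>
     (\<forall>x\<in>D. g x \<in> Rd d \<and> (f has_derivative (\<lambda>h. inner (g x) h)) (at x within Rd d))
     \<and> continuous_on D g"

definition F1 :: "nat \<Rightarrow> fvec set \<Rightarrow> real \<Rightarrow> (fvec \<Rightarrow> real) set" where
  "F1 d D L1 = {f. \<exists>g. C1_grad d D f g \<and> L1-lipschitz_on D g}"

definition C1L :: "nat \<Rightarrow> fvec set \<Rightarrow> real \<Rightarrow> real \<Rightarrow> (fvec \<Rightarrow> real) set" where
  "C1L d D L0 L1 = {f. \<exists>g. C1_grad d D f g \<and> (\<forall>x\<in>D. \<bar>f x\<bar> \<le> 1)
                        \<and> L0-lipschitz_on D f \<and> L1-lipschitz_on D g}"

text \<open>An adaptive algorithm using n function values: the k-th point is psi k applied to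
  the list of the k values already computed; the output is phi applied to the list of
  all n values (for n = 0 this is a constant algorithm).\<close>
fun info :: "(nat \<Rightarrow> real list \<Rightarrow> 'a) \<Rightarrow> ('a \<Rightarrow> real) \<Rightarrow> nat \<Rightarrow> real list" where
  "info psi f 0 = []"
| "info psi f (Suc k) = info psi f k @ [f (psi k (info psi f k))]"

definition err_le :: "'a measure \<Rightarrow> 'a set \<Rightarrow> ('a \<Rightarrow> real) set \<Rightarrow> nat
     \<Rightarrow> (nat \<Rightarrow> real list \<Rightarrow> 'a) \<Rightarrow> (real list \<Rightarrow> real) \<Rightarrow> real \<Rightarrow> bool" where
  "err_le M D F n psi phi eps \<longleftrightarrow>
     (\<forall>f\<in>F. \<bar>(LINT x:D|M. f x) - phi (info psi f n)\<bar> \<le> eps)"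

definition inf_compl :: "'a measure \<Rightarrow> 'a set \<Rightarrow> real \<Rightarrow> ('a \<Rightarrow> real) set \<Rightarrow> nat" where
  "inf_compl M D eps F = (LEAST n. \<exists>psi phi. (\<forall>k ys. psi k ys \<in> D) \<and> err_le M D F n psi phi eps)"

definition diam :: "fvec set \<Rightarrow> ereal" where
  "diam D = (SUP x\<in>D. SUP y\<in>D. ereal (dist x y))"

end

theory Submission
  imports Defs
begin


definition ee :: "nat \<Rightarrow> fvec" where "ee i = Abs_fvec (\<lambda>j. if j = i then 1 else 0)"

lemma coord_ee: "coord (ee i) j = (if j = i then 1 else 0)"
  unfolding ee_def by (subst Abs_fvec_inverse) auto

lemma coord_add: "coord (x + y) j = coord x j + coord y j" by (simp add: plus_fvec.rep_eq)
lemma coord_diff: "coord (x - y) j = coord x j - coord y j" by (simp add: minus_fvec.rep_eq)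
lemma coord_scaleR: "coord (r *\<^sub>R x) j = r * coord x j" by (simp add: scaleR_fvec.rep_eq)
lemma coord_zero: "coord 0 j = 0" by (simp add: zero_fvec.rep_eq)

lemma coord_sum: "finite S \<Longrightarrow> coord (sum f S) j = (\<Sum>i\<in>S. coord (f i) j)"
  by (induction S rule: finite_induct) (auto simp: coord_add coord_zero)

lemma inner_ee: "inner x (ee i) = coord x i"
proof -
  have fin: "finite {j. coord x j \<noteq> 0}" using coord by auto
  let ?S = "{j. coord x j \<noteq> 0 \<or> coord (ee i) j \<noteq> 0}"
  have finS: "finite ?S"
    by (rule finite_subset[of _ "{j. coord x j \<noteq> 0} \<union> {i}"]) (use fin in \<open>auto simp: coord_ee\<close>)
  have "inner x (ee i) = (\<Sum>j\<in>?S. coord x j * coord (ee i) j)"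
    by (simp add: inner_fvec.rep_eq)
  also have "\<dots> = (\<Sum>j\<in>?S. if j = i then coord x i else 0)"
    by (rule sum.cong) (auto simp: coord_ee)
  also have "\<dots> = coord x i" using finS by (simp add: coord_ee)
  finally show ?thesis .
qed

lemma norm_ee: "norm (ee i) = 1"
  by (simp add: norm_eq_sqrt_inner inner_ee coord_ee)

lemma Rd_expand: "x \<in> Rd d \<Longrightarrow> x = (\<Sum>i<d. coord x i *\<^sub>R ee i)"
  apply (rule coord_inject[THEN iffD1])
  apply (rule ext)
  subgoal for j
    by (auto simp: coord_sum coord_scaleR coord_ee Rd_def if_distrib[where f="\<lambda>t. _ * t"] cong: if_cong)
  done

lemma inner_Rd: "a \<in> Rd d \<Longrightarrow> inner a x = (\<Sum>i<d. coord a i * coord x i)"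
proof -
  assume a: "a \<in> Rd d"
  have "inner a x = inner (\<Sum>i<d. coord a i *\<^sub>R ee i) x" using Rd_expand[OF a] by simp
  also have "\<dots> = (\<Sum>i<d. coord a i * coord x i)"
    by (simp add: inner_sum_left inner_commute[of "ee _"] inner_ee)
  finally show ?thesis .
qed

lemma Rd_eq: "Rd d = (\<Inter>i\<in>{d..}. {x. inner x (ee i) = 0})"
  by (auto simp: Rd_def inner_ee)

lemma closed_Rd: "closed (Rd d)"
  unfolding Rd_eq
  by (intro closed_INT ballI closed_Collect_eq continuous_intros)

lemma Rd_subspace:
  "0 \<in> Rd d" "x \<in> Rd d \<Longrightarrow> y \<in> Rd d \<Longrightarrow> x + y \<in> Rd d"
  "x \<in> Rd d \<Longrightarrow> y \<in> Rd d \<Longrightarrow> x - y \<in> Rd d" "x \<in> Rd d \<Longrightarrow> r *\<^sub>R x \<in> Rd d"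
  by (auto simp: Rd_def coord_add coord_diff coord_scaleR coord_zero)

lemma Rd_0: "Rd 0 = {0}"
  using Rd_subspace(1) by (auto simp: Rd_def coord_inject[symmetric] coord_zero fun_eq_iff)

lemma compact_Rd_cball: "compact (cball 0 R \<inter> Rd d)"
proof (induction d)
  case 0
  then show ?case by (simp add: Rd_0 finite_imp_compact)
next
  case (Suc d)
  let ?F = "\<lambda>(x, t). x + t *\<^sub>R ee d"
  have cS: "compact (?F ` ((cball 0 R \<inter> Rd d) \<times> cball (0::real) R))"
    apply (rule compact_continuous_image)
    apply (simp add: case_prod_unfold; intro continuous_intros)
    using Suc compact_Times compact_cball by blast
  have sub: "cball 0 R \<inter> Rd (Suc d) \<subseteq> ?F ` ((cball 0 R \<inter> Rd d) \<times> cball (0::real) R)"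
  proof
    fix x assume x: "x \<in> cball 0 R \<inter> Rd (Suc d)"
    define t where "t = coord x d"
    define y where "y = x - t *\<^sub>R ee d"
    have yR: "y \<in> Rd d" using x by (auto simp: Rd_def y_def coord_diff coord_scaleR coord_ee t_def)
    have xy: "x = y + t *\<^sub>R ee d" by (simp add: y_def)
    have "inner y (ee d) = 0" by (simp add: inner_ee y_def coord_diff coord_scaleR coord_ee t_def)
    then have i0: "inner (ee d) y = 0" by (simp add: inner_commute)
    have "(norm x)\<^sup>2 = inner (y + t *\<^sub>R ee d) (y + t *\<^sub>R ee d)"
      by (simp add: power2_norm_eq_inner xy[symmetric])
    also have "\<dots> = inner y y + t * t"
      using \<open>inner y (ee d) = 0\<close> i0
      by (simp add: inner_add_left inner_add_right inner_ee coord_ee coord_add coord_scaleR)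
    finally have eq: "(norm x)\<^sup>2 = (norm y)\<^sup>2 + t\<^sup>2"
      by (simp add: power2_norm_eq_inner[symmetric] power2_eq_square)
    have nx: "norm x \<le> R" using x by simp
    have "norm y \<le> norm x"
      by (rule power2_le_imp_le) (use eq in auto)
    moreover have "\<bar>t\<bar> \<le> norm x"
      by (rule power2_le_imp_le) (use eq in auto)
    ultimately show "x \<in> ?F ` ((cball 0 R \<inter> Rd d) \<times> cball (0::real) R)"
      using nx yR xy by (auto intro!: image_eqI[where x="(y, t)"])
  qed
  have "cball 0 R \<inter> Rd (Suc d) = ?F ` ((cball 0 R \<inter> Rd d) \<times> cball (0::real) R) \<inter> (cball 0 R \<inter> Rd (Suc d))"
    using sub by blast
  then show ?case using cS closed_Rd by (metis closed_Int closed_cball compact_Int_closed)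
qed

lemma compact_Rd_bounded: "bounded S \<Longrightarrow> closed S \<Longrightarrow> S \<subseteq> Rd d \<Longrightarrow> compact S"
proof -
  assume "bounded S" "closed S" "S \<subseteq> Rd d"
  then obtain R where "\<forall>x\<in>S. norm x \<le> R" by (meson bounded_iff)
  then have "S \<subseteq> cball 0 R" by auto
  then have "S = (cball 0 R \<inter> Rd d) \<inter> S" using \<open>S \<subseteq> Rd d\<close> by blast
  then show ?thesis using compact_Rd_cball \<open>closed S\<close> by (metis compact_Int_closed)
qed



lemma segment_closure_in:
  assumes sub: "D \<subseteq> Rd d" and cvx: "convex D" and pD: "p \<in> D"
    and rho: "\<rho> > 0" "ball p \<rho> \<inter> Rd d \<subseteq> D"
    and k: "k \<in> closure D" and t: "0 \<le> t" "t < 1"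
  shows "p + t *\<^sub>R (k - p) \<in> D"
proof (cases "t = 0")
  case True then show ?thesis using pD by simp
next
  case False
  then have t0: "t > 0" using t by simp
  have kR: "k \<in> Rd d" using closure_minimal[OF sub closed_Rd] k by blast
  obtain k' where k': "k' \<in> D" "dist k' k < \<rho> * (1 - t) / t"
    using k t0 t rho unfolding closure_approachable by (meson divide_pos_pos mult_pos_pos diff_gt_0_iff_gt)
  define p' where "p' = p + (t / (1 - t)) *\<^sub>R (k - k')"
  have "p' \<in> Rd d" using kR k' sub pD by (auto simp: p'_def intro!: Rd_subspace)
  moreover have "dist p' p < \<rho>"
  proof -
    have "dist p' p = t / (1 - t) * norm (k - k')" using t by (simp add: p'_def dist_norm)
    also have "\<dots> < t / (1 - t) * (\<rho> * (1 - t) / t)"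
      using k' t0 t by (intro mult_strict_left_mono) (auto simp: dist_norm norm_minus_commute)
    also have "\<dots> = \<rho>" using t0 t by (simp add: field_simps)
    finally show ?thesis .
  qed
  ultimately have p'D: "p' \<in> D" using rho by (auto simp: dist_commute)
  have "(1 - t) *\<^sub>R p' + t *\<^sub>R k' \<in> D"
    using convexD[OF cvx p'D k'(1)] t by simp
  moreover have "(1 - t) *\<^sub>R p' + t *\<^sub>R k' = p + t *\<^sub>R (k - p)"
  proof -
    have e: "(1 - t) *\<^sub>R p' = (1 - t) *\<^sub>R p + t *\<^sub>R (k - k')"
      using t by (simp add: p'_def scaleR_add_right)
    have "(1 - t) *\<^sub>R p' + t *\<^sub>R k' = ((1 - t) *\<^sub>R p + t *\<^sub>R (k - k')) + t *\<^sub>R k'"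
      by (simp only: e)
    also have "\<dots> = p + t *\<^sub>R (k - p)" by (simp add: algebra_simps)
    finally show ?thesis .
  qed
  ultimately show ?thesis by simp
qed

lemma support_fixed_t:
  assumes sub: "D \<subseteq> Rd d" and cvx: "convex D" and bnd: "bounded D" and pD: "p \<in> D"
    and rho: "\<rho> > 0" "ball p \<rho> \<inter> Rd d \<subseteq> D"
    and c: "c \<in> Rd d" "c \<notin> D" and t: "0 \<le> t" "t < 1"
  shows "\<exists>b\<in>Rd d. norm b = 1 \<and> (\<forall>x\<in>D. inner b (p + t *\<^sub>R (x - p) - c) \<ge> 0)"
proof -
  let ?K = "closure D"
  have KR: "?K \<subseteq> Rd d" using closure_minimal[OF sub closed_Rd] .
  have cK: "compact ?K" using compact_Rd_bounded[OF bounded_closure[OF bnd] closed_closure KR] .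
  let ?f = "\<lambda>k. ((1 - t) *\<^sub>R p) + t *\<^sub>R k"
  have feq: "\<And>k. ?f k = p + t *\<^sub>R (k - p)" by (simp add: algebra_simps)
  let ?C = "?f ` ?K"
  have cC: "compact ?C" by (rule compact_continuous_image[OF _ cK]) (intro continuous_intros)
  have vC: "convex ?C" by (rule convex_affinity) (use cvx in simp)
  have CD: "?C \<subseteq> D" using segment_closure_in[OF sub cvx pD rho _ t] feq by auto
  have neC: "?C \<noteq> {}" using pD closure_subset by blast
  have "continuous_on ?C (dist c)" by (intro continuous_intros)
  then obtain y where yC: "y \<in> ?C" and ymin: "\<And>z. z \<in> ?C \<Longrightarrow> dist c y \<le> dist c z"
    using continuous_attains_inf[OF cC neC] by blast
  have yR: "y \<in> Rd d" using yC CD sub by blast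
  have yc: "y \<noteq> c" using yC CD c by blast
  have key: "inner (y - c) (x - c) \<ge> (norm (y - c))\<^sup>2" if xC: "x \<in> ?C" for x
  proof -
    have "\<not> inner (c - y) (x - y) > 0"
    proof
      assume "inner (c - y) (x - y) > 0"
      then obtain u where u: "u > 0" "u \<le> 1" "dist (y + u *\<^sub>R (x - y)) c < dist y c"
        using closer_point_lemma by blast
      have "y + u *\<^sub>R (x - y) = (1 - u) *\<^sub>R y + u *\<^sub>R x" by (simp add: algebra_simps)
      then have "y + u *\<^sub>R (x - y) \<in> ?C" using convexD[OF vC yC xC, of "1 - u" u] u by simp
      then show False using ymin u(3) by (fastforce simp: dist_commute)
    qed
    then have "inner (c - y) (x - y) \<le> 0" by simp
    moreover have "inner (y - c) (x - c) = - inner (c - y) (x - y) + inner (y - c) (y - c)"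
      by (simp add: inner_diff_left inner_diff_right inner_commute algebra_simps)
    ultimately show ?thesis by (simp add: power2_norm_eq_inner)
  qed
  define b where "b = (1 / norm (y - c)) *\<^sub>R (y - c)"
  have bR: "b \<in> Rd d" using yR c by (auto simp: b_def intro!: Rd_subspace)
  have nb: "norm b = 1" using yc by (simp add: b_def)
  have "inner b (p + t *\<^sub>R (x - p) - c) \<ge> 0" if "x \<in> D" for x
  proof -
    have "p + t *\<^sub>R (x - p) \<in> ?C" using that closure_subset feq by (metis image_eqI subsetD)
    from key[OF this] have "inner (y - c) (p + t *\<^sub>R (x - p) - c) \<ge> 0"
      by (meson order_trans zero_le_power2)
    then show ?thesis by (simp add: b_def)
  qed
  then show ?thesis using bR nb by blast
qed

lemma support_strict:
  assumes sub: "D \<subseteq> Rd d" and cvx: "convex D" and bnd: "bounded D" and pD: "p \<in> D"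
    and opn: "openin (top_of_set (Rd d)) D"
    and c: "c \<in> Rd d" "c \<notin> D"
  shows "\<exists>b\<in>Rd d. \<forall>x\<in>D. inner b (x - c) > 0"
proof -
  have balls: "\<forall>x\<in>D. \<exists>e>0. ball x e \<inter> Rd d \<subseteq> D" using opn by (simp add: openin_contains_ball)
  obtain \<rho> where rho: "\<rho> > 0" "ball p \<rho> \<inter> Rd d \<subseteq> D" using balls pD by blast
  define t where "t n = 1 - 1 / (real n + 2)" for n
  have t: "0 \<le> t n" "t n < 1" for n by (auto simp: t_def field_simps)
  have "\<forall>n. \<exists>b. b \<in> Rd d \<and> norm b = 1 \<and> (\<forall>x\<in>D. inner b (p + t n *\<^sub>R (x - p) - c) \<ge> 0)"
    using support_fixed_t[OF sub cvx bnd pD rho c t] by blast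
  then obtain B where B: "\<And>n. B n \<in> Rd d" "\<And>n. norm (B n) = 1"
      "\<And>n x. x \<in> D \<Longrightarrow> inner (B n) (p + t n *\<^sub>R (x - p) - c) \<ge> 0"
    by metis
  have "compact (cball 0 1 \<inter> Rd d)" by (rule compact_Rd_cball)
  then have sc: "seq_compact (cball 0 1 \<inter> Rd d)" by (rule compact_imp_seq_compact)
  have "\<forall>n. B n \<in> cball 0 1 \<inter> Rd d" using B by auto
  then obtain b r where br: "b \<in> cball 0 1 \<inter> Rd d" "strict_mono r" "(B \<circ> r) \<longlonglongrightarrow> b"
    using seq_compactE[OF sc] by metis
  have "(\<lambda>n. norm ((B \<circ> r) n)) \<longlonglongrightarrow> norm b" using br(3) by (rule tendsto_norm)
  then have nb: "norm b = 1" using B(2) by (simp add: LIMSEQ_const_iff o_def)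
  have tlim: "t \<longlonglongrightarrow> 1"
  proof -
    have "(\<lambda>n. 1 / (real n + 2)) \<longlonglongrightarrow> 0"
    proof -
      have "(\<lambda>n. 1 / (real (n + 2))) \<longlonglongrightarrow> 0"
        using LIMSEQ_ignore_initial_segment[OF lim_const_over_n[of 1], of 2] by simp
      then show ?thesis by (simp add: add.commute)
    qed
    then show ?thesis unfolding t_def using tendsto_diff[OF tendsto_const[of 1]] by fastforce
  qed
  have weak: "inner b (x - c) \<ge> 0" if x: "x \<in> D" for x
  proof -
    have "(\<lambda>n. inner ((B \<circ> r) n) (p + (t \<circ> r) n *\<^sub>R (x - p) - c)) \<longlonglongrightarrow> inner b (p + 1 *\<^sub>R (x - p) - c)"
      by (intro tendsto_intros br(3) LIMSEQ_subseq_LIMSEQ[OF tlim br(2)])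
    moreover have "\<forall>n. 0 \<le> inner ((B \<circ> r) n) (p + (t \<circ> r) n *\<^sub>R (x - p) - c)"
      using B(3)[OF x] by simp
    ultimately have "0 \<le> inner b (p + 1 *\<^sub>R (x - p) - c)"
      by (intro LIMSEQ_le_const) auto
    then show ?thesis by simp
  qed
  have "inner b (x - c) > 0" if x: "x \<in> D" for x
  proof -
    obtain e where e: "e > 0" "ball x e \<inter> Rd d \<subseteq> D" using balls x by blast
    have "x - (e / 2) *\<^sub>R b \<in> Rd d" using x sub br(1) by (auto intro!: Rd_subspace)
    moreover have "dist x (x - (e / 2) *\<^sub>R b) < e" using nb e by (simp add: dist_norm)
    ultimately have "x - (e / 2) *\<^sub>R b \<in> D" using e by auto
    from weak[OF this] have "0 \<le> inner b (x - c) - (e / 2) * inner b b"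
      by (simp add: inner_diff_right algebra_simps)
    moreover have "inner b b = 1" using nb by (simp add: norm_eq_sqrt_inner)
    ultimately show ?thesis using e by simp
  qed
  then show ?thesis using br(1) by blast
qed



lemma set_integral_sum':
  fixes f :: "nat \<Rightarrow> 'a \<Rightarrow> real"
  assumes "finite I" "\<And>i. i \<in> I \<Longrightarrow> set_integrable M A (f i)"
  shows "set_integrable M A (\<lambda>x. \<Sum>i\<in>I. f i x) \<and> (LINT x:A|M. (\<Sum>i\<in>I. f i x)) = (\<Sum>i\<in>I. LINT x:A|M. f i x)"
  using assms
proof (induction I rule: finite_induct)
  case empty
  then show ?case by (simp add: set_integrable_def set_lebesgue_integral_def)
next
  case (insert i I)
  then have a: "set_integrable M A (f i)" and b: "set_integrable M A (\<lambda>x. \<Sum>i\<in>I. f i x)"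
    and e: "(LINT x:A|M. (\<Sum>i\<in>I. f i x)) = (\<Sum>i\<in>I. LINT x:A|M. f i x)" by auto
  show ?case using insert.hyps set_integral_add[OF a b] e by simp
qed

locale cset =
  fixes d :: nat and D :: "fvec set" and r :: real
  assumes sub: "D \<subseteq> Rd d" and cvx: "convex D" and opn: "openin (top_of_set (Rd d)) D"
    and vol: "emeasure (lebesgue_d d) D = 1"
    and diam: "\<And>x y. x \<in> D \<Longrightarrow> y \<in> D \<Longrightarrow> dist x y \<le> r"
begin

abbreviation "M \<equiv> lebesgue_d d"

lemma setsM: "sets M = sets borel" by (simp add: lebesgue_d_def)
lemma spaceM: "space M = UNIV" by (simp add: lebesgue_d_def)

lemma D_borel: "D \<in> sets borel"
proof -
  obtain T where "open T" "D = Rd d \<inter> T" using opn by (auto simp: openin_open)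
  then show ?thesis using closed_Rd by (metis borel_closed borel_open sets.Int)
qed

lemma DM: "D \<in> sets M" using D_borel setsM by simp
lemma measD: "measure M D = 1" using vol by (simp add: measure_def)
lemma finD: "emeasure M D \<noteq> \<infinity>" using vol by simp
lemma Dne: "D \<noteq> {}" using vol by auto

definition "p0 = (SOME p. p \<in> D)"
lemma p0: "p0 \<in> D" unfolding p0_def by (subst some_in_eq) (rule Dne)

lemma normD: "x \<in> D \<Longrightarrow> norm x \<le> norm p0 + r"
  using diam[of x p0] p0 norm_triangle_ineq2[of x p0] by (simp add: dist_norm)

lemma bndD: "bounded D"
  unfolding bounded_iff using normD by blast

lemma I1:
  fixes h :: "fvec \<Rightarrow> real"
  assumes "continuous_on D h" "\<And>x. x \<in> D \<Longrightarrow> \<bar>h x\<bar> \<le> B"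
  shows "set_integrable M D h"
  unfolding set_integrable_def
proof (rule integrableI_bounded_set[where A=D and B=B])
  have "(\<lambda>x. indicator D x *\<^sub>R h x) \<in> borel_measurable borel"
    by (rule borel_measurable_continuous_on_indicator[OF D_borel assms(1)])
  then show "(\<lambda>x. indicator D x *\<^sub>R h x) \<in> borel_measurable M"
    by (simp only: measurable_cong_sets[OF setsM refl])
  show "D \<in> sets M" by (rule DM)
  show "emeasure M D < \<infinity>" using vol by simp
  show "AE x in M. x \<in> D \<longrightarrow> norm (indicator D x *\<^sub>R h x) \<le> B"
    using assms(2) by (auto intro!: AE_I2)
  show "AE x in M. x \<notin> D \<longrightarrow> indicator D x *\<^sub>R h x = 0" by (auto intro!: AE_I2)
qed

lemma I_const: "set_integrable M D (\<lambda>_. a :: real)"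
  by (rule I1[where B="\<bar>a\<bar>"]) auto

lemma I_coord: "set_integrable M D (\<lambda>x. coord x i)"
proof -
  have "set_integrable M D (\<lambda>x. inner x (ee i))"
  proof (rule I1[where B="norm p0 + r"])
    show "continuous_on D (\<lambda>x. inner x (ee i))" by (intro continuous_intros)
    fix x assume "x \<in> D"
    have "\<bar>inner x (ee i)\<bar> \<le> norm x" using Cauchy_Schwarz_ineq2[of x "ee i"] by (simp add: norm_ee)
    then show "\<bar>inner x (ee i)\<bar> \<le> norm p0 + r" using normD[OF \<open>x \<in> D\<close>] by linarith
  qed
  then show ?thesis by (simp add: inner_ee)
qed

lemma I_inner: "set_integrable M D (\<lambda>x. inner a (x - c))"
proof (rule I1[where B="norm a * (norm p0 + r + norm c)"])
  show "continuous_on D (\<lambda>x. inner a (x - c))" by (intro continuous_intros)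
  fix x assume x: "x \<in> D"
  have "\<bar>inner a (x - c)\<bar> \<le> norm a * norm (x - c)" by (rule Cauchy_Schwarz_ineq2)
  also have "\<dots> \<le> norm a * (norm p0 + r + norm c)"
    using normD[OF x] norm_triangle_ineq4[of x c] by (intro mult_left_mono) auto
  finally show "\<bar>inner a (x - c)\<bar> \<le> norm a * (norm p0 + r + norm c)" .
qed

definition "cen = (\<Sum>i<d. (LINT x:D|M. coord x i) *\<^sub>R ee i)"

lemma coord_cen: "coord cen j = (if j < d then (LINT x:D|M. coord x j) else 0)"
  unfolding cen_def by (simp add: coord_sum coord_scaleR coord_ee if_distrib[where f="\<lambda>t. _ * t"] cong: if_cong)

lemma cen_Rd: "cen \<in> Rd d" by (simp add: Rd_def coord_cen)

lemma cstint: "(LINT x:D|M. (a::real)) = a"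
  by (simp only: set_integral_const[OF DM finD] measD scaleR_one)

lemma zero_mean:
  assumes a: "a \<in> Rd d"
  shows "(LINT x:D|M. inner a (x - cen)) = 0"
proof -
  have eq: "inner a (x - cen) = (\<Sum>i<d. coord a i * (coord x i - coord cen i))" for x
    using inner_Rd[OF a] by (simp add: coord_diff)
  have each: "set_integrable M D (\<lambda>x. coord a i * (coord x i - coord cen i))" for i
    by (rule set_integrable_mult_right) (rule set_integral_diff(1)[OF I_coord I_const])
  have z: "(LINT x:D|M. coord a i * (coord x i - coord cen i)) = 0" if "i < d" for i
  proof -
    have "(LINT x:D|M. coord x i - coord cen i) = (LINT x:D|M. coord x i) - (LINT x:D|M. coord cen i)"
      by (rule set_integral_diff(2)[OF I_coord I_const])
    also have "\<dots> = (LINT x:D|M. coord x i) - coord cen i" by (simp only: cstint)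
    also have "\<dots> = 0" using that by (simp only: coord_cen if_True diff_self)
    finally have i1: "(LINT x:D|M. coord x i - coord cen i) = 0" .
    show ?thesis by (simp only: set_integral_mult_right i1 mult_zero_right)
  qed
  have "(LINT x:D|M. inner a (x - cen)) = (LINT x:D|M. (\<Sum>i<d. coord a i * (coord x i - coord cen i)))"
    by (simp only: eq)
  also have "\<dots> = (\<Sum>i<d. LINT x:D|M. coord a i * (coord x i - coord cen i))"
    by (rule conjunct2[OF set_integral_sum'[where I="{..<d}" and A=D and M="lebesgue_d d" and f="\<lambda>i x. coord a i * (coord x i - coord cen i)", OF finite_lessThan each]])
  also have "\<dots> = 0" by (rule sum.neutral) (metis z lessThan_iff)
  finally show ?thesis .
qed

lemma cen_D: "cen \<in> D"
proof (rule ccontr)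
  assume nc: "cen \<notin> D"
  obtain b where b: "b \<in> Rd d" "\<And>x. x \<in> D \<Longrightarrow> inner b (x - cen) > 0"
    using support_strict[OF sub cvx bndD p0 opn cen_Rd nc] by (elim bexE) (rule that, assumption, blast)
  let ?h = "\<lambda>x. indicator D x *\<^sub>R inner b (x - cen)"
  have int: "integrable M ?h" using I_inner unfolding set_integrable_def .
  have nn0: "0 \<le> ?h x" for x
  proof (cases "x \<in> D")
    case True then show ?thesis using b(2)[OF True] by simp
  next
    case False then show ?thesis by simp
  qed
  have nn: "AE x in M. 0 \<le> ?h x" by (rule AE_I2) (rule nn0)
  have "integral\<^sup>L M ?h = 0" using zero_mean[OF b(1)] unfolding set_lebesgue_integral_def .
  then have ae0: "AE x in M. ?h x = 0" by (rule iffD1[OF integral_nonneg_eq_0_iff_AE[OF int nn]])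
  have imp: "?h x = 0 \<Longrightarrow> x \<notin> D" for x
  proof
    assume "?h x = 0" "x \<in> D"
    then show False using b(2)[of x] by simp
  qed
  from ae0 have ae: "AE x in M. x \<notin> D" by (rule eventually_mono) (rule imp)
  have seteq: "{x \<in> space M. \<not> (x \<notin> D)} = D" by (auto simp: spaceM)
  have "emeasure M D = 0"
    by (rule iffD1[OF AE_iff_measurable[where P="\<lambda>x. x \<notin> D", OF DM seteq] ae])
  then show False using vol by simp
qed

lemma r_nonneg: "0 \<le> r" using diam[OF p0 p0] by simp

lemma taylor:
  assumes C1: "C1_grad d D f g" and lip: "L-lipschitz_on D g" and c: "c \<in> D" and x: "x \<in> D"
  shows "\<bar>f x - f c - inner (g c) (x - c)\<bar> \<le> L * r * r"
proof -
  let ?k = "\<lambda>y. f y - inner (g c) y"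
  have L0: "0 \<le> L" using lip by (rule lipschitz_on_nonneg)
  have der: "(?k has_derivative (\<lambda>h. inner (g y) h - inner (g c) h)) (at y within D)" if y: "y \<in> D" for y
  proof -
    have "(f has_derivative (\<lambda>h. inner (g y) h)) (at y within Rd d)" using C1 y by (simp add: C1_grad_def)
    then have "(f has_derivative (\<lambda>h. inner (g y) h)) (at y within D)" using has_derivative_subset sub by blast
    moreover have "((\<lambda>y. inner (g c) y) has_derivative (\<lambda>h. inner (g c) h)) (at y within D)"
      by (rule bounded_linear_imp_has_derivative[OF bounded_linear_inner_right])
    ultimately show ?thesis by (rule has_derivative_diff)
  qed
  have onb: "onorm (\<lambda>h. inner (g y) h - inner (g c) h) \<le> L * r" if y: "y \<in> D" for y
  proof (rule onorm_bound)
    show "0 \<le> L * r" using L0 r_nonneg by simp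
    fix h
    have "norm (inner (g y) h - inner (g c) h) = \<bar>inner (g y - g c) h\<bar>" by (simp add: inner_diff_left)
    also have "\<dots> \<le> norm (g y - g c) * norm h" by (rule Cauchy_Schwarz_ineq2)
    also have "\<dots> \<le> (L * r) * norm h"
    proof (rule mult_right_mono)
      have "norm (g y - g c) \<le> L * dist y c" using lipschitz_onD[OF lip y c] by (simp add: dist_norm)
      also have "\<dots> \<le> L * r" using mult_left_mono[OF diam[OF y c] L0] .
      finally show "norm (g y - g c) \<le> L * r" .
    qed simp
    finally show "norm (inner (g y) h - inner (g c) h) \<le> L * r * norm h" .
  qed
  have "norm (?k x - ?k c) \<le> L * r * norm (x - c)"
    by (rule differentiable_bound[OF cvx der onb x c])
  also have "\<dots> \<le> L * r * r"
    using diam[OF x c] L0 r_nonneg by (intro mult_left_mono) (auto simp: dist_norm)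
  finally show ?thesis by (simp add: inner_diff_right algebra_simps)
qed

lemma err_bound:
  assumes f: "f \<in> F1 d D L" and eps: "L * r * r \<le> eps"
  shows "\<bar>(LINT x:D|M. f x) - f cen\<bar> \<le> eps"
proof -
  obtain g where C1: "C1_grad d D f g" and lip: "L-lipschitz_on D g" using f by (auto simp: F1_def)
  define R where "R x = f x - f cen - inner (g cen) (x - cen)" for x
  have Rb: "\<bar>R x\<bar> \<le> L * r * r" if "x \<in> D" for x
    unfolding R_def by (rule taylor[OF C1 lip cen_D that])
  have contf: "continuous_on D f"
  proof (rule has_derivative_continuous_on)
    fix y assume y: "y \<in> D"
    have "(f has_derivative (\<lambda>h. inner (g y) h)) (at y within Rd d)" using C1 y by (simp add: C1_grad_def)
    then show "(f has_derivative (\<lambda>h. inner (g y) h)) (at y within D)" using has_derivative_subset sub by blast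
  qed
  have IR: "set_integrable M D R"
    by (rule I1[where B="L * r * r"]) (use contf Rb in \<open>auto simp: R_def intro!: continuous_intros\<close>)
  have IA: "set_integrable M D (\<lambda>x. f cen + inner (g cen) (x - cen))"
    using set_integral_add(1)[OF I_const I_inner] .
  have feq: "f = (\<lambda>x. (f cen + inner (g cen) (x - cen)) + R x)" by (simp add: R_def fun_eq_iff)
  have "(LINT x:D|M. f x) = (LINT x:D|M. (f cen + inner (g cen) (x - cen)) + R x)"
    by (subst feq) (rule refl)
  also have "\<dots> = (LINT x:D|M. f cen + inner (g cen) (x - cen)) + (LINT x:D|M. R x)"
    by (rule set_integral_add(2)[OF IA IR])
  also have "(LINT x:D|M. f cen + inner (g cen) (x - cen)) = (LINT x:D|M. f cen) + (LINT x:D|M. inner (g cen) (x - cen))"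
    by (rule set_integral_add(2)[OF I_const I_inner])
  also have "(LINT x:D|M. inner (g cen) (x - cen)) = 0"
    using zero_mean C1 cen_D by (simp add: C1_grad_def)
  also have "(LINT x:D|M. f cen) = f cen"
    using set_integral_const[OF DM finD] measD by simp
  finally have i: "(LINT x:D|M. f x) - f cen = (LINT x:D|M. R x)" by simp
  have cst: "(LINT x:D|M. (L * r * r)) = L * r * r" and cst2: "(LINT x:D|M. - (L * r * r)) = - (L * r * r)"
    by (simp_all only: set_integral_const[OF DM finD] measD scaleR_one)
  have "(LINT x:D|M. R x) \<le> (LINT x:D|M. (L * r * r))"
    by (rule set_integral_mono[OF IR I_const]) (use Rb in \<open>auto simp: abs_le_iff\<close>)
  moreover have "(LINT x:D|M. - (L * r * r)) \<le> (LINT x:D|M. R x)"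
    by (rule set_integral_mono[OF I_const IR]) (use Rb in \<open>force simp: abs_le_iff\<close>)
  ultimately have "\<bar>LINT x:D|M. R x\<bar> \<le> L * r * r" using cst cst2 by linarith
  then show ?thesis using i eps by simp
qed

end



lemma const_C1L:
  assumes "\<bar>a\<bar> \<le> 1" "L0 > 0" "L1 > 0"
  shows "(\<lambda>_. a) \<in> C1L d D L0 L1"
proof -
  have z: "inner (0::fvec) = (\<lambda>_. 0)" by (rule ext) simp
  have "C1_grad d D (\<lambda>_. a) (\<lambda>_. 0)"
    unfolding C1_grad_def by (auto simp: Rd_subspace(1) z intro: has_derivative_const)
  moreover have "L0-lipschitz_on D (\<lambda>_. a)" "L1-lipschitz_on D (\<lambda>_. 0::fvec)"
    using assms by (auto simp: lipschitz_on_def)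
  ultimately show ?thesis using assms unfolding C1L_def by blast
qed

lemma C1L_F1: "C1L d D L0 L1 \<subseteq> F1 d D L1"
  unfolding C1L_def F1_def by blast

lemma main_d:
  assumes sub: "D \<subseteq> Rd d" and cvx: "convex D" and opn: "openin (top_of_set (Rd d)) D"
    and vol: "emeasure (lebesgue_d d) D = 1"
    and L0: "L0 > 0" and L1: "L1 > 0" and eps: "0 < eps" "eps < 1"
    and dm: "ereal L1 * diam D ^ 2 \<le> ereal eps"
  shows "inf_compl (lebesgue_d d) D eps (C1L d D L0 L1) = 1 \<and> inf_compl (lebesgue_d d) D eps (F1 d D L1) = 1"
proof -
  have Dne: "D \<noteq> {}" using vol by auto
  then obtain p where p: "p \<in> D" by blast
  have le: "ereal (dist x y) \<le> diam D" if "x \<in> D" "y \<in> D" for x y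
    unfolding diam_def using that by (meson SUP_upper order_trans)
  have nn: "0 \<le> diam D" using le[OF p p] by (simp add: zero_ereal_def)
  obtain r where r: "diam D = ereal r" and rle: "L1 * r * r \<le> eps"
  proof (cases "diam D")
    case (real r)
    then have "L1 * r\<^sup>2 \<le> eps" using dm by (simp add: power2_eq_square)
    then show ?thesis using that real by (simp add: power2_eq_square mult.assoc)
  next
    case PInf
    then show ?thesis using dm L1 by (simp add: power2_eq_square)
  next
    case MInf
    then show ?thesis using nn by simp
  qed
  have diam': "dist x y \<le> r" if "x \<in> D" "y \<in> D" for x y using le[OF that] r by simp
  interpret cset d D r
    by unfold_locales (use sub cvx opn vol diam' in auto)
  define psi where "psi = (\<lambda>(k::nat) (ys::real list). cen)"
  define phi where "phi = (\<lambda>ys::real list. hd ys)"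
  have info1: "info psi f 1 = [f cen]" for f by (simp add: psi_def)
  have okF: "err_le M D (F1 d D L1) 1 psi phi eps"
    unfolding err_le_def
  proof
    fix f assume f: "f \<in> F1 d D L1"
    have "phi (info psi f 1) = f cen" unfolding info1 phi_def by simp
    then show "\<bar>(LINT x:D|M. f x) - phi (info psi f 1)\<bar> \<le> eps" using err_bound[OF f rle] by simp
  qed
  have okC: "err_le M D (C1L d D L0 L1) 1 psi phi eps"
    using okF C1L_F1 unfolding err_le_def by blast
  have psiD: "\<forall>k ys. psi k ys \<in> D" using cen_D by (simp add: psi_def)
  have cstint: "(LINT x:D|M. a) = a" for a :: real
    by (simp only: set_integral_const[OF DM finD] measD scaleR_one)
  have no0C: "\<not> err_le M D (C1L d D L0 L1) 0 psi' phi' eps" for psi' phi'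
  proof
    assume e: "err_le M D (C1L d D L0 L1) 0 psi' phi' eps"
    have e1: "\<bar>(LINT x:D|M. (\<lambda>_. 1::real) x) - phi' (info psi' (\<lambda>_. 1::real) 0)\<bar> \<le> eps"
      using e const_C1L[of 1 L0 L1 d D] L0 L1 unfolding err_le_def by simp
    have e2: "\<bar>(LINT x:D|M. (\<lambda>_. -1::real) x) - phi' (info psi' (\<lambda>_. -1::real) 0)\<bar> \<le> eps"
      using e const_C1L[of "-1" L0 L1 d D] L0 L1 unfolding err_le_def by simp
    have "\<bar>1 - phi' []\<bar> \<le> eps" using e1 by (simp only: cstint info.simps(1))
    moreover have "\<bar>-1 - phi' []\<bar> \<le> eps" using e2 by (simp only: cstint info.simps(1))
    ultimately show False using eps by linarith
  qed
  have no0F: "\<not> err_le M D (F1 d D L1) 0 psi' phi' eps" for psi' phi'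
    using no0C C1L_F1 unfolding err_le_def by blast
  have "inf_compl M D eps (C1L d D L0 L1) = 1"
    unfolding inf_compl_def
  proof (rule Least_equality)
    show "\<exists>psi phi. (\<forall>k ys. psi k ys \<in> D) \<and> err_le M D (C1L d D L0 L1) 1 psi phi eps"
      using psiD okC by blast
    fix n assume a: "\<exists>psi phi. (\<forall>k ys. psi k ys \<in> D) \<and> err_le M D (C1L d D L0 L1) n psi phi eps"
    show "1 \<le> n"
    proof (rule ccontr)
      assume "\<not> 1 \<le> n"
      then have "n = 0" by simp
      then show False using a no0C by blast
    qed
  qed
  moreover have "inf_compl M D eps (F1 d D L1) = 1"
    unfolding inf_compl_def
  proof (rule Least_equality)
    show "\<exists>psi phi. (\<forall>k ys. psi k ys \<in> D) \<and> err_le M D (F1 d D L1) 1 psi phi eps"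
      using psiD okF by blast
    fix n assume a: "\<exists>psi phi. (\<forall>k ys. psi k ys \<in> D) \<and> err_le M D (F1 d D L1) n psi phi eps"
    show "1 \<le> n"
    proof (rule ccontr)
      assume "\<not> 1 \<le> n"
      then have "n = 0" by simp
      then show False using a no0F by blast
    qed
  qed
  ultimately show ?thesis by simp
qed

theorem proposition4p4:
  fixes D :: "nat \<Rightarrow> fvec set" and L0 L1 :: "nat \<Rightarrow> real"
  assumes sub: "\<And>d. d \<ge> 1 \<Longrightarrow> D d \<subseteq> Rd d"
    and cvx: "\<And>d. d \<ge> 1 \<Longrightarrow> convex (D d)"
    and opn: "\<And>d. d \<ge> 1 \<Longrightarrow> openin (top_of_set (Rd d)) (D d)"
    and vol: "\<And>d. d \<ge> 1 \<Longrightarrow> emeasure (lebesgue_d d) (D d) = 1"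
    and L0pos: "\<And>d. d \<ge> 1 \<Longrightarrow> L0 d > 0"
    and L1pos: "\<And>d. d \<ge> 1 \<Longrightarrow> L1 d > 0"
  shows "(\<forall>d\<ge>1. \<forall>eps. 0 < eps \<and> eps < 1 \<and> ereal (L1 d) * diam (D d) ^ 2 \<le> ereal eps \<longrightarrow>
            inf_compl (lebesgue_d d) (D d) eps (C1L d (D d) (L0 d) (L1 d)) = 1 \<and>
            inf_compl (lebesgue_d d) (D d) eps (F1 d (D d) (L1 d)) = 1)
       \<and> (((\<lambda>d. ereal (L1 d) * diam (D d) ^ 2) \<longlonglongrightarrow> 0) \<longrightarrow>
            (\<forall>eps. 0 < eps \<and> eps < 1 \<longrightarrow>
              (\<forall>\<^sub>F d in sequentially.
                 inf_compl (lebesgue_d d) (D d) eps (C1L d (D d) (L0 d) (L1 d)) = 1 \<and>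
                 inf_compl (lebesgue_d d) (D d) eps (F1 d (D d) (L1 d)) = 1)))"
proof -
  have P0: "inf_compl (lebesgue_d d) (D d) eps (C1L d (D d) (L0 d) (L1 d)) = 1 \<and>
            inf_compl (lebesgue_d d) (D d) eps (F1 d (D d) (L1 d)) = 1"
    if d: "1 \<le> d" and e0: "0 < eps" and e1: "eps < 1" and dm: "ereal (L1 d) * diam (D d) ^ 2 \<le> ereal eps"
    for d eps
    by (rule main_d[OF sub[OF d] cvx[OF d] opn[OF d] vol[OF d] L0pos[OF d] L1pos[OF d] e0 e1 dm])
  show ?thesis
  proof (rule conjI)
    show "\<forall>d\<ge>1. \<forall>eps. 0 < eps \<and> eps < 1 \<and> ereal (L1 d) * diam (D d) ^ 2 \<le> ereal eps \<longrightarrow>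
            inf_compl (lebesgue_d d) (D d) eps (C1L d (D d) (L0 d) (L1 d)) = 1 \<and>
            inf_compl (lebesgue_d d) (D d) eps (F1 d (D d) (L1 d)) = 1"
      using P0 by blast
  next
    show "((\<lambda>d. ereal (L1 d) * diam (D d) ^ 2) \<longlonglongrightarrow> 0) \<longrightarrow>
            (\<forall>eps. 0 < eps \<and> eps < 1 \<longrightarrow>
              (\<forall>\<^sub>F d in sequentially.
                 inf_compl (lebesgue_d d) (D d) eps (C1L d (D d) (L0 d) (L1 d)) = 1 \<and>
                 inf_compl (lebesgue_d d) (D d) eps (F1 d (D d) (L1 d)) = 1))"
    proof (intro impI allI)
    fix eps :: real
    assume lim: "(\<lambda>d. ereal (L1 d) * diam (D d) ^ 2) \<longlonglongrightarrow> 0" and e: "0 < eps \<and> eps < 1"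
    have "\<forall>\<^sub>F d in sequentially. ereal (L1 d) * diam (D d) ^ 2 < ereal eps"
      using order_tendstoD(2)[OF lim] e by simp
    moreover have "\<forall>\<^sub>F d in sequentially. (1::nat) \<le> d" by (rule eventually_ge_at_top)
    ultimately show "\<forall>\<^sub>F d in sequentially.
                 inf_compl (lebesgue_d d) (D d) eps (C1L d (D d) (L0 d) (L1 d)) = 1 \<and>
                 inf_compl (lebesgue_d d) (D d) eps (F1 d (D d) (L1 d)) = 1"
    proof eventually_elim
      case (elim d)
      show ?case using e elim by (intro P0) auto
    qed
    qed
  qed
qed

end
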